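(* Let $X=\mathcal{P}(\omega)$ equipped with the subset relation, let $\Gamma$ be the group of all automorphisms of $\langle X,\subseteq\rangle$ acting by application, and let $I$ be the ideal of finite subsets of $X$. Then $\Gamma\curvearrowright X, I$ is almost simple but not simple.
   Context: For a group $\Gamma$ acting on $X$ and $a\subseteq X$, $\mathrm{pstab}(a)=\{\gamma\in\Gamma:\gamma\cdot x=x\ \forall x\in a\}$. A dynamical ideal $\Gamma\curvearrowright X, I$ (a $\Gamma$-invariant ideal containing all singletons) is simple if for all $a\subseteq b$ in $I$, the only normal subgroup of $\mathrm{pstab}(a)$ containing $\mathrm{pstab}(b)$ is $\mathrm{pstab}(a)$ itself; it is almost simple if every set in $I$ has a superset $a\in I$ such that for every $b\in I$ with $a\subseteq b$, the only normal subgroup of $\mathrm{pstab}(a)$ containing $\mathrm{pstab}(b)$ is $\mathrm{pstab}(a)$. *)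

theory Defs
  imports "HOL-Algebra.Group" "HOL-Algebra.Coset"
begin

definition perm_group :: "('a \<Rightarrow> 'a) set \<Rightarrow> ('a \<Rightarrow> 'a) monoid" where
  "perm_group S = \<lparr>carrier = S, mult = (\<circ>), one = id\<rparr>"

definition pstab :: "('a \<Rightarrow> 'a) set \<Rightarrow> 'a set \<Rightarrow> ('a \<Rightarrow> 'a) set" where
  "pstab \<Gamma> a = {g \<in> \<Gamma>. \<forall>x \<in> a. g x = x}"

definition dynamical_ideal :: "('a \<Rightarrow> 'a) set \<Rightarrow> 'a set set \<Rightarrow> bool" where
  "dynamical_ideal \<Gamma> I \<longleftrightarrow>
     (\<forall>a \<in> I. \<forall>b. b \<subseteq> a \<longrightarrow> b \<in> I) \<and>
     (\<forall>a \<in> I. \<forall>b \<in> I. a \<union> b \<in> I) \<and>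
     (\<forall>x. {x} \<in> I) \<and>
     (\<forall>g \<in> \<Gamma>. \<forall>a \<in> I. g ` a \<in> I)"

definition stab_simple_pair :: "('a \<Rightarrow> 'a) set \<Rightarrow> 'a set \<Rightarrow> 'a set \<Rightarrow> bool" where
  "stab_simple_pair \<Gamma> a b \<longleftrightarrow>
     (\<forall>N. N \<lhd> perm_group (pstab \<Gamma> a) \<and> pstab \<Gamma> b \<subseteq> N \<longrightarrow> N = pstab \<Gamma> a)"

definition simple_dyn :: "('a \<Rightarrow> 'a) set \<Rightarrow> 'a set set \<Rightarrow> bool" where
  "simple_dyn \<Gamma> I \<longleftrightarrow> (\<forall>a \<in> I. \<forall>b \<in> I. a \<subseteq> b \<longrightarrow> stab_simple_pair \<Gamma> a b)"

definition almost_simple_dyn :: "('a \<Rightarrow> 'a) set \<Rightarrow> 'a set set \<Rightarrow> bool" where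
  "almost_simple_dyn \<Gamma> I \<longleftrightarrow>
     (\<forall>c \<in> I. \<exists>a \<in> I. c \<subseteq> a \<and> (\<forall>b \<in> I. a \<subseteq> b \<longrightarrow> stab_simple_pair \<Gamma> a b))"

definition subset_auts :: "(nat set \<Rightarrow> nat set) set" where
  "subset_auts = {f. bij f \<and> (\<forall>A B. A \<subseteq> B \<longleftrightarrow> f A \<subseteq> f B)}"

end

theory Submission
  imports Defs "HOL-Library.Infinite_Set"
begin


abbreviation iv :: "('a \<Rightarrow> 'b) \<Rightarrow> 'b \<Rightarrow> 'a" where "iv f \<equiv> Hilbert_Choice.inv f"

definition img :: "(nat \<Rightarrow> nat) \<Rightarrow> nat set \<Rightarrow> nat set" where "img \<sigma> = (\<lambda>A. \<sigma> ` A)"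

definition sp :: "nat set \<Rightarrow> (nat \<Rightarrow> nat) \<Rightarrow> bool" where
 "sp P \<sigma> \<longleftrightarrow> bij \<sigma> \<and> (\<forall>x. x \<notin> P \<longrightarrow> \<sigma> x = x)"

lemma img_comp: "img (f \<circ> g) = img f \<circ> img g" by (auto simp: img_def fun_eq_iff image_comp)
lemma img_id: "img id = id" by (auto simp: img_def fun_eq_iff)

lemma img_aut: assumes "bij \<sigma>" shows "img \<sigma> \<in> subset_auts"
proof -
  have inj: "inj \<sigma>" and su: "surj \<sigma>" using assms bij_is_inj bij_is_surj by auto
  have "bij (img \<sigma>)"
  proof (rule bij_betw_byWitness[where f'="img (iv \<sigma>)"])
    show "\<forall>a\<in>UNIV. img (iv \<sigma>) (img \<sigma> a) = a" using inj by (simp add: img_def image_comp)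
    show "\<forall>a'\<in>UNIV. img \<sigma> (img (iv \<sigma>) a') = a'" using su
      by (simp add: img_def image_comp surj_iff)
  qed auto
  moreover have "\<forall>A B. A \<subseteq> B \<longleftrightarrow> img \<sigma> A \<subseteq> img \<sigma> B"
    using inj by (simp add: img_def inj_image_subset_iff)
  ultimately show ?thesis by (simp add: subset_auts_def)
qed

lemma aut_rep: assumes "f \<in> subset_auts" shows "\<exists>\<sigma>. bij \<sigma> \<and> f = img \<sigma>"
proof -
  have bf: "bij f" and ord: "\<And>A B. A \<subseteq> B \<longleftrightarrow> f A \<subseteq> f B" using assms by (auto simp: subset_auts_def)
  have inj: "\<And>A B. f A = f B \<Longrightarrow> A = B" using ord by (metis subset_antisym order_refl)
  have surj: "\<And>Y. \<exists>Z. Y = f Z" using bf by (metis bij_def surj_def)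
  obtain Z0 where "{} = f Z0" using surj by blast
  hence e: "f {} = {}" using ord[of "{}" Z0] by auto
  have sing: "\<exists>y. f {x} = {y}" for x
  proof -
    have "f {x} \<noteq> {}" using e inj by (metis insert_not_empty)
    then obtain y where y: "y \<in> f {x}" by blast
    obtain Z where Z: "{y} = f Z" using surj by blast
    have "Z \<subseteq> {x}" using ord[of Z "{x}"] Z y by auto
    moreover have "Z \<noteq> {}" using Z e by auto
    ultimately have "Z = {x}" by auto
    thus ?thesis using Z by auto
  qed
  define \<sigma> where "\<sigma> x = (SOME y. f {x} = {y})" for x
  have \<sigma>: "f {x} = {\<sigma> x}" for x using sing[of x] unfolding \<sigma>_def by (rule someI_ex)
  have fA: "f A = \<sigma> ` A" for A
  proof
    show "\<sigma> ` A \<subseteq> f A"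
    proof
      fix y assume "y \<in> \<sigma> ` A"
      then obtain x where "x \<in> A" "y = \<sigma> x" by auto
      thus "y \<in> f A" using ord[of "{x}" A] \<sigma>[of x] by auto
    qed
    show "f A \<subseteq> \<sigma> ` A"
    proof
      fix y assume y: "y \<in> f A"
      obtain Z where Z: "{y} = f Z" using surj by blast
      have "Z \<noteq> {}" using Z e by auto
      then obtain x where x: "x \<in> Z" by auto
      have "f {x} \<subseteq> f Z" using ord[of "{x}" Z] x by auto
      hence "\<sigma> x = y" using Z \<sigma>[of x] by auto
      moreover have "x \<in> A" using ord[of "{x}" A] \<sigma>[of x] y \<open>\<sigma> x = y\<close> by auto
      ultimately show "y \<in> \<sigma> ` A" by auto
    qed
  qed
  have "inj \<sigma>"
  proof (rule injI)
    fix x y assume "\<sigma> x = \<sigma> y"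
    hence "f {x} = f {y}" using \<sigma> by simp
    thus "x = y" using inj by blast
  qed
  moreover have "surj \<sigma>"
  proof -
    have "y \<in> range \<sigma>" for y
    proof -
      obtain Z where "{y} = f Z" using surj by blast
      hence "y \<in> \<sigma> ` Z" using fA[of Z] by auto
      thus ?thesis by auto
    qed
    thus ?thesis by auto
  qed
  ultimately show ?thesis using fA by (auto simp: bij_def img_def fun_eq_iff)
qed

lemma pstab_img: "bij \<sigma> \<Longrightarrow> img \<sigma> \<in> pstab subset_auts a \<longleftrightarrow> (\<forall>A\<in>a. \<sigma> ` A = A)"
  using img_aut[of \<sigma>] by (auto simp: pstab_def img_def)

lemma inv_aut: assumes "f \<in> subset_auts" shows "iv f \<in> subset_auts"
proof -
  have bf: "bij f" and ord: "\<And>A B. A \<subseteq> B \<longleftrightarrow> f A \<subseteq> f B" using assms by (auto simp: subset_auts_def)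
  have fi: "f (iv f A) = A" for A using bf by (simp add: bij_is_surj surj_f_inv_f)
  have "A \<subseteq> B \<longleftrightarrow> iv f A \<subseteq> iv f B" for A B using ord[of "iv f A" "iv f B"] fi by simp
  thus ?thesis using bf bij_imp_bij_inv by (auto simp: subset_auts_def)
qed

lemma grp: "group (perm_group (pstab subset_auts a))"
proof (rule groupI)
  fix x y assume "x \<in> carrier (perm_group (pstab subset_auts a))" "y \<in> carrier (perm_group (pstab subset_auts a))"
  thus "x \<otimes>\<^bsub>perm_group (pstab subset_auts a)\<^esub> y \<in> carrier (perm_group (pstab subset_auts a))"
    by (auto simp: perm_group_def pstab_def subset_auts_def bij_comp)
next
  show "\<one>\<^bsub>perm_group (pstab subset_auts a)\<^esub> \<in> carrier (perm_group (pstab subset_auts a))"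
    by (auto simp: perm_group_def pstab_def subset_auts_def)
next
  fix x assume x: "x \<in> carrier (perm_group (pstab subset_auts a))"
  hence xa: "x \<in> subset_auts" and fx: "\<forall>A\<in>a. x A = A" by (auto simp: perm_group_def pstab_def)
  have bx: "bij x" using xa by (auto simp: subset_auts_def)
  have "iv x \<in> pstab subset_auts a" using inv_aut[OF xa] fx bx
    by (auto simp: pstab_def bij_is_inj inv_f_eq)
  moreover have "iv x \<circ> x = id" using bx by (simp add: bij_is_inj)
  ultimately show "\<exists>y\<in>carrier (perm_group (pstab subset_auts a)). y \<otimes>\<^bsub>perm_group (pstab subset_auts a)\<^esub> x = \<one>\<^bsub>perm_group (pstab subset_auts a)\<^esub>"
    by (auto simp: perm_group_def)
qed (auto simp: perm_group_def)

lemma inv_img: assumes "bij \<rho>" "img \<rho> \<in> pstab subset_auts a"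
  shows "inv\<^bsub>perm_group (pstab subset_auts a)\<^esub> (img \<rho>) = img (iv \<rho>)"
proof -
  have bi: "bij (iv \<rho>)" using assms bij_imp_bij_inv by blast
  have "img (iv \<rho>) \<in> pstab subset_auts a" using assms bi
    by (simp add: pstab_img) (metis bij_is_inj image_inv_f_f)
  moreover have "img (iv \<rho>) \<circ> img \<rho> = id" using assms
    by (simp add: img_comp[symmetric] bij_is_inj img_id)
  ultimately show ?thesis using assms by (intro group.inv_equality[OF grp]) (auto simp: perm_group_def)
qed

definition sig :: "nat set set \<Rightarrow> nat \<Rightarrow> nat set set" where "sig a x = {A\<in>a. x\<in>A}"

lemma fix_sig: assumes "bij \<sigma>" shows "(\<forall>A\<in>a. \<sigma> ` A = A) \<longleftrightarrow> (\<forall>x. sig a (\<sigma> x) = sig a x)"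
proof
  assume h: "\<forall>A\<in>a. \<sigma> ` A = A"
  have "\<sigma> x \<in> A \<longleftrightarrow> x \<in> A" if "A \<in> a" for x A
    using h that assms by (metis bij_is_inj inj_image_mem_iff)
  thus "\<forall>x. sig a (\<sigma> x) = sig a x" by (auto simp: sig_def)
next
  assume h: "\<forall>x. sig a (\<sigma> x) = sig a x"
  have m: "\<sigma> x \<in> A \<longleftrightarrow> x \<in> A" if "A \<in> a" for x A
    using h[rule_format, of x] that by (auto simp: sig_def)
  show "\<forall>A\<in>a. \<sigma> ` A = A"
  proof (intro ballI equalityI subsetI)
    fix A y assume "A \<in> a" "y \<in> \<sigma> ` A" thus "y \<in> A" using m by auto
  next
    fix A y assume A: "A \<in> a" "y \<in> A"
    obtain x where "y = \<sigma> x" using assms by (metis bij_def surj_def)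
    thus "y \<in> \<sigma> ` A" using m A by auto
  qed
qed



lemma split_inf: fixes S :: "nat set" assumes "infinite S"
  shows "\<exists>A B. A \<union> B = S \<and> A \<inter> B = {} \<and> infinite A \<and> infinite B"
proof -
  have bj: "bij_betw (enumerate S) UNIV S" using bij_enumerate[OF assms] .
  hence inj: "inj (enumerate S)" by (simp add: bij_betw_def)
  define A where "A = enumerate S ` {n. even n}"
  define B where "B = enumerate S ` {n. odd n}"
  have ie: "infinite {n::nat. even n}"
    unfolding infinite_nat_iff_unbounded_le by (metis dvd_triv_left le_add2 mem_Collect_eq mult_2)
  have io: "infinite {n::nat. odd n}"
  proof (unfold infinite_nat_iff_unbounded_le, intro allI)
    fix m :: nat show "\<exists>n\<ge>m. n \<in> {n. odd n}" by (rule exI[of _ "2*m+1"]) auto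
  qed
  have "A \<union> B = enumerate S ` UNIV" unfolding A_def B_def by auto
  also have "\<dots> = S" using bj by (simp add: bij_betw_def)
  finally have "A \<union> B = S" .
  moreover have "A \<inter> B = {}" unfolding A_def B_def using inj by (auto simp: inj_eq)
  moreover have "infinite A" unfolding A_def using ie inj by (metis finite_imageD inj_on_subset subset_UNIV)
  moreover have "infinite B" unfolding B_def using io inj by (metis finite_imageD inj_on_subset subset_UNIV)
  ultimately show ?thesis by blast
qed

lemma bij_inf: fixes A B :: "nat set" assumes "infinite A" "infinite B" shows "\<exists>h. bij_betw h A B"
proof -
  have "bij_betw (enumerate A) UNIV A" "bij_betw (enumerate B) UNIV B"
    using bij_enumerate assms by auto
  hence "bij_betw (enumerate B \<circ> the_inv_into UNIV (enumerate A)) A B"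
    by (meson bij_betw_the_inv_into bij_betw_trans)
  thus ?thesis by blast
qed

lemma sp_maps: assumes "sp P \<sigma>" "x \<in> P" shows "\<sigma> x \<in> P"
proof (rule ccontr)
  assume "\<sigma> x \<notin> P"
  hence "\<sigma> (\<sigma> x) = \<sigma> x" using assms by (auto simp: sp_def)
  hence "\<sigma> x = x" using assms by (auto simp: sp_def bij_def inj_eq)
  thus False using \<open>\<sigma> x \<notin> P\<close> assms by simp
qed

lemma conj_perm: assumes "R \<subseteq> P" "T \<subseteq> P" "infinite R" "infinite (P - R)" "infinite T" "infinite (P - T)"
  shows "\<exists>\<rho>. sp P \<rho> \<and> \<rho> ` R = T"
proof -
  obtain h1 where h1: "bij_betw h1 R T" using bij_inf assms by blast
  obtain h2 where h2: "bij_betw h2 (P - R) (P - T)" using bij_inf assms by blast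
  define \<rho> where "\<rho> x = (if x \<in> R then h1 x else if x \<in> P then h2 x else x)" for x
  have b1: "bij_betw \<rho> R T" using h1 by (rule bij_betw_cong[THEN iffD1, rotated]) (auto simp: \<rho>_def)
  have b2: "bij_betw \<rho> (P - R) (P - T)" using h2 by (rule bij_betw_cong[THEN iffD1, rotated]) (auto simp: \<rho>_def)
  have b3: "bij_betw \<rho> (- P) (- P)" by (rule bij_betw_cong[THEN iffD1, rotated, of id]) (use assms(1) in \<open>auto simp: \<rho>_def\<close>)
  have "bij_betw \<rho> (R \<union> (P - R) \<union> - P) (T \<union> (P - T) \<union> - P)"
    by (intro bij_betw_combine b1 b2 b3) (use assms(2) in auto)
  moreover have "R \<union> (P - R) \<union> - P = UNIV" "T \<union> (P - T) \<union> - P = UNIV" by auto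
  ultimately have "bij \<rho>" by simp
  moreover have "\<rho> ` R = T" using b1 by (simp add: bij_betw_def)
  moreover have "\<forall>x. x \<notin> P \<longrightarrow> \<rho> x = x" using assms(1) by (auto simp: \<rho>_def)
  ultimately show ?thesis unfolding sp_def by blast
qed



definition dd0 :: "nat set \<Rightarrow> nat \<Rightarrow> nat" where "dd0 E t = (LEAST x. x \<in> E \<and> t \<le> x)"

fun thr :: "(nat \<Rightarrow> nat) \<Rightarrow> nat set \<Rightarrow> nat \<Rightarrow> nat" where
  "thr s E 0 = 0"
| "thr s E (Suc n) = Suc (max (dd0 E (thr s E n)) (max (s (dd0 E (thr s E n))) (iv s (dd0 E (thr s E n)))))"

lemma dd0_prop: assumes "infinite E" shows "dd0 E t \<in> E \<and> t \<le> dd0 E t"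
proof -
  have "\<exists>x. x \<in> E \<and> t \<le> x" using assms unfolding infinite_nat_iff_unbounded_le by blast
  thus ?thesis unfolding dd0_def by (rule LeastI_ex)
qed

lemma exists_indep: fixes s :: "nat \<Rightarrow> nat"
  assumes E: "infinite E" and b: "bij s" and nf: "\<forall>x\<in>E. s x \<noteq> x"
  shows "\<exists>D. D \<subseteq> E \<and> infinite D \<and> D \<inter> s ` D = {}"
proof -
  define t where "t = thr s E"
  define d where "d n = dd0 E (t n)" for n
  have dE: "d n \<in> E" and dt: "t n \<le> d n" for n using dd0_prop[OF E] by (auto simp: d_def)
  have tS: "t (Suc n) = Suc (max (d n) (max (s (d n)) (iv s (d n))))" for n by (simp add: t_def d_def)
  have tmono: "mono t" unfolding mono_iff_le_Suc by (metis tS dt le_SucI max.coboundedI1 order.trans)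
  have big: "d n < d m \<and> s (d n) < d m \<and> iv s (d n) < d m" if "n < m" for n m
  proof -
    have "t (Suc n) \<le> t m" using tmono that by (simp add: mono_def)
    thus ?thesis using tS[of n] dt[of m] by linarith
  qed
  have sm: "strict_mono d" using big by (simp add: strict_mono_def)
  have "d m \<noteq> s (d n)" for m n
  proof (cases n m rule: linorder_cases)
    case less thus ?thesis using big by fastforce
  next
    case equal thus ?thesis using nf dE by metis
  next
    case greater
    show ?thesis
    proof
      assume "d m = s (d n)"
      hence "iv s (d m) = d n" using b by (simp add: bij_is_inj)
      thus False using big[OF greater] by simp
    qed
  qed
  hence "range d \<inter> s ` range d = {}" by auto
  moreover have "infinite (range d)" using sm strict_mono_imp_inj_on range_inj_infinite by blast
  moreover have "range d \<subseteq> E" using dE by auto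
  ultimately show ?thesis by blast
qed

lemma cell_lemma:
  assumes Q: "infinite Q" "Q \<subseteq> P"
  and W1: "\<And>\<tau> \<tau>'. \<tau> \<in> W \<Longrightarrow> \<tau>' \<in> W \<Longrightarrow> \<tau> \<circ> \<tau>' \<in> W"
  and W2: "\<And>\<rho> \<tau>. sp P \<rho> \<Longrightarrow> \<tau> \<in> W \<Longrightarrow> \<rho> \<circ> \<tau> \<circ> iv \<rho> \<in> W"
  and W3: "\<And>\<tau>. sp Q \<tau> \<Longrightarrow> \<tau> \<in> W"
  and \<sigma>: "sp P \<sigma>"
  shows "\<sigma> \<in> W"
proof -
  obtain R R2 where R: "R \<union> R2 = Q" "R \<inter> R2 = {}" "infinite R" "infinite R2" using split_inf[OF Q(1)] by blast
  have stepA: "\<pi> \<in> W" if \<pi>: "sp T \<pi>" and T: "T \<subseteq> P" "infinite (P - T)" for T \<pi>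
  proof -
    obtain A B where AB: "A \<union> B = P - T" "A \<inter> B = {}" "infinite A" "infinite B" using split_inf[OF T(2)] by blast
    define T' where "T' = T \<union> A"
    have T': "T' \<subseteq> P" "infinite T'" "infinite (P - T')"
    proof -
      show "T' \<subseteq> P" using T AB unfolding T'_def by auto
      show "infinite T'" using AB unfolding T'_def by auto
      have "B \<subseteq> P - T'" using AB unfolding T'_def by auto
      thus "infinite (P - T')" using AB finite_subset by blast
    qed
    have "R2 \<subseteq> P - R" using R Q by auto
    hence "infinite (P - R)" using R finite_subset by blast
    then obtain \<rho> where \<rho>: "sp P \<rho>" "\<rho> ` R = T'" using conj_perm[of R P T'] R Q T' by blast
    have b\<rho>: "bij \<rho>" using \<rho> by (simp add: sp_def)
    define \<tau> where "\<tau> = iv \<rho> \<circ> \<pi> \<circ> \<rho>"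
    have "sp R \<tau>"
    proof -
      have "bij \<tau>" unfolding \<tau>_def using b\<rho> \<pi> by (auto simp: sp_def intro!: bij_comp bij_imp_bij_inv)
      moreover have "\<tau> x = x" if "x \<notin> R" for x
      proof -
        have "\<rho> x \<notin> T'"
        proof
          assume "\<rho> x \<in> T'"
          then obtain r where "r \<in> R" "\<rho> x = \<rho> r" using \<rho> by auto
          hence "x = r" using b\<rho> by (simp add: bij_is_inj inj_eq)
          thus False using that \<open>r \<in> R\<close> by simp
        qed
        hence "\<rho> x \<notin> T" unfolding T'_def by simp
        hence "\<pi> (\<rho> x) = \<rho> x" using \<pi> by (simp add: sp_def)
        thus ?thesis unfolding \<tau>_def using b\<rho> by (simp add: bij_is_inj)
      qed
      ultimately show ?thesis by (simp add: sp_def)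
    qed
    hence "sp Q \<tau>" using R by (auto simp: sp_def)
    hence "\<tau> \<in> W" by (rule W3)
    hence "\<rho> \<circ> \<tau> \<circ> iv \<rho> \<in> W" using W2 \<rho> by blast
    moreover have "\<rho> \<circ> \<tau> \<circ> iv \<rho> = \<pi>"
    proof
      fix x
      show "(\<rho> \<circ> \<tau> \<circ> iv \<rho>) x = \<pi> x" unfolding \<tau>_def using b\<rho>
        by (simp add: bij_is_surj bij_is_inj surj_f_inv_f)
    qed
    ultimately show ?thesis by simp
  qed
  have bs: "bij \<sigma>" and fs: "\<And>x. x \<notin> P \<Longrightarrow> \<sigma> x = x" using \<sigma> by (auto simp: sp_def)
  define Fx where "Fx = {x\<in>P. \<sigma> x = x}"
  show ?thesis
  proof (cases "finite Fx")
    case False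
    have "sp (P - Fx) \<sigma>" using \<sigma> by (auto simp: sp_def Fx_def)
    moreover have "P - (P - Fx) = Fx" by (auto simp: Fx_def)
    ultimately show ?thesis using stepA[of "P - Fx" \<sigma>] False by auto
  next
    case True
    have "infinite (P - Fx)" using True Q by (metis finite_Diff2 finite_subset)
    moreover have "\<forall>x\<in>P - Fx. \<sigma> x \<noteq> x" by (auto simp: Fx_def)
    ultimately have "\<exists>D. D \<subseteq> P - Fx \<and> infinite D \<and> D \<inter> \<sigma> ` D = {}"
      by (rule exists_indep[OF _ bs])
    then obtain D' where D': "D' \<subseteq> P - Fx" "infinite D'" "D' \<inter> \<sigma> ` D' = {}"
      by blast
    obtain D D2 where D: "D \<union> D2 = D'" "D \<inter> D2 = {}" "infinite D" "infinite D2"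
      using split_inf[OF D'(2)] by blast
    have DP: "D \<subseteq> P" using D D' by auto
    have sDP: "\<sigma> ` D \<subseteq> P" using DP sp_maps[OF \<sigma>] by auto
    have disj: "D \<inter> \<sigma> ` D = {}" using D D' by blast
    define \<beta> where "\<beta> x = (if x \<in> D then \<sigma> x else if x \<in> \<sigma> ` D then iv \<sigma> x else x)" for x
    have ivs: "iv \<sigma> (\<sigma> x) = x" "\<sigma> (iv \<sigma> x) = x" for x using bs by (auto simp: bij_is_inj bij_is_surj surj_f_inv_f)
    have \<beta>\<beta>: "\<beta> (\<beta> x) = x" for x
    proof (cases "x \<in> D")
      case True
      hence "\<sigma> x \<in> \<sigma> ` D" "\<sigma> x \<notin> D" using disj by auto
      thus ?thesis using True ivs by (simp add: \<beta>_def)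
    next
      case False
      show ?thesis
      proof (cases "x \<in> \<sigma> ` D")
        case True
        then obtain y where "y \<in> D" "x = \<sigma> y" by auto
        thus ?thesis using False ivs by (simp add: \<beta>_def)
      qed (use False in \<open>simp add: \<beta>_def\<close>)
    qed
    have b\<beta>: "bij \<beta>" using \<beta>\<beta> by (rule involuntory_imp_bij)
    have "sp (D \<union> \<sigma> ` D) \<beta>" using b\<beta> by (auto simp: sp_def \<beta>_def)
    moreover have "infinite (P - (D \<union> \<sigma> ` D))"
    proof -
      have "D2 \<subseteq> P - (D \<union> \<sigma> ` D)" using D D' by blast
      thus ?thesis using D finite_subset by blast
    qed
    ultimately have \<beta>W: "\<beta> \<in> W" using stepA DP sDP by blast
    define \<gamma> where "\<gamma> = \<beta> \<circ> \<sigma>"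
    have "sp (P - D) \<gamma>"
    proof -
      have "bij \<gamma>" unfolding \<gamma>_def using b\<beta> bs by (rule bij_comp[rotated])
      moreover have "\<gamma> x = x" if "x \<notin> P - D" for x
      proof (cases "x \<in> D")
        case True
        hence "\<sigma> x \<in> \<sigma> ` D" "\<sigma> x \<notin> D" using disj by auto
        thus ?thesis using True ivs by (simp add: \<beta>_def \<gamma>_def)
      next
        case False
        hence "x \<notin> P" using that by simp
        hence "\<sigma> x = x" using fs by simp
        thus ?thesis using \<open>x \<notin> P\<close> DP sDP by (auto simp: \<beta>_def \<gamma>_def)
      qed
      ultimately show ?thesis by (simp add: sp_def)
    qed
    moreover have "P - (P - D) = D" using DP by auto
    ultimately have \<gamma>W: "\<gamma> \<in> W" using stepA[of "P - D" \<gamma>] D by auto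
    have "\<beta> \<circ> \<gamma> = \<sigma>" unfolding \<gamma>_def using \<beta>\<beta> by (auto simp: fun_eq_iff)
    thus ?thesis using W1[OF \<beta>W \<gamma>W] by simp
  qed
qed



lemma iv_pstab: assumes "f \<in> pstab subset_auts a" shows "iv f \<in> pstab subset_auts a"
proof -
  have xa: "f \<in> subset_auts" and fx: "\<forall>A\<in>a. f A = A" using assms by (auto simp: pstab_def)
  have bx: "bij f" using xa by (auto simp: subset_auts_def)
  show ?thesis using inv_aut[OF xa] fx bx by (auto simp: pstab_def bij_is_inj inv_f_eq)
qed

lemma inv_gen: assumes "f \<in> pstab subset_auts a"
  shows "inv\<^bsub>perm_group (pstab subset_auts a)\<^esub> f = iv f"
proof -
  have "bij f" using assms by (auto simp: pstab_def subset_auts_def)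
  hence "iv f \<circ> f = id" by (simp add: bij_is_inj)
  thus ?thesis using assms iv_pstab[OF assms] by (intro group.inv_equality[OF grp]) (auto simp: perm_group_def)
qed

lemma comp_aut: assumes "f \<in> subset_auts" "g \<in> subset_auts" shows "f \<circ> g \<in> subset_auts"
proof -
  have "bij f" "bij g" using assms by (auto simp: subset_auts_def)
  hence "bij (f \<circ> g)" by (rule bij_comp[rotated])
  moreover have "\<forall>A B. A \<subseteq> B \<longleftrightarrow> (f \<circ> g) A \<subseteq> (f \<circ> g) B" using assms by (simp add: subset_auts_def)
  ultimately show ?thesis by (simp add: subset_auts_def)
qed

lemma restr_bij: assumes "bij \<sigma>" "\<forall>x. g (\<sigma> x) = g x"
  shows "bij (\<lambda>x. if g x \<in> K then \<sigma> x else x)"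
proof (rule bijI)
  show "inj (\<lambda>x. if g x \<in> K then \<sigma> x else x)"
  proof (rule injI)
    fix x y assume h: "(if g x \<in> K then \<sigma> x else x) = (if g y \<in> K then \<sigma> y else y)"
    show "x = y"
    proof (cases "g x \<in> K"; cases "g y \<in> K")
      assume "g x \<in> K" "g y \<in> K" thus ?thesis using h assms by (simp add: bij_is_inj inj_eq)
    next
      assume gx: "g x \<in> K" "g y \<notin> K"
      hence "\<sigma> x = y" using h by simp
      hence "g y = g x" using assms(2)[rule_format, of x] by simp
      thus ?thesis using gx by simp
    next
      assume gx: "g x \<notin> K" "g y \<in> K"
      hence "\<sigma> y = x" using h by simp
      hence "g y = g x" using assms(2)[rule_format, of y] by simp
      thus ?thesis using gx by simp
    next
      assume "g x \<notin> K" "g y \<notin> K" thus ?thesis using h by simp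
    qed
  qed
  show "surj (\<lambda>x. if g x \<in> K then \<sigma> x else x)"
  proof (unfold surj_def, rule allI)
    fix y
    obtain x where x: "y = \<sigma> x" using assms by (metis bij_def surj_def)
    show "\<exists>z. y = (if g z \<in> K then \<sigma> z else z)"
      by (rule exI[of _ "if g y \<in> K then x else y"]) (use x assms in auto)
  qed
qed

lemma sig_in_Pow: "sig a x \<in> Pow a" by (auto simp: sig_def)

lemma not_simple: "\<not> simple_dyn subset_auts {a :: nat set set. finite a}"
proof -
  define a :: "nat set set" where "a = {{0,1}}"
  define b :: "nat set set" where "b = {{0,1},{0},{1}}"
  let ?G = "perm_group (pstab subset_auts a)"
  have G: "group ?G" by (rule grp)
  have ba: "pstab subset_auts b \<subseteq> pstab subset_auts a" by (auto simp: pstab_def a_def b_def)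
  have sw: "y {0} \<in> {{0},{1}} \<and> y {1} \<in> {{0},{1}}" if y: "y \<in> pstab subset_auts a" for y
  proof -
    have "y \<in> subset_auts" using y by (simp add: pstab_def)
    then obtain \<mu> where \<mu>: "bij \<mu>" "y = img \<mu>" using aut_rep by blast
    have "\<mu> ` {0,1} = {0,1}" using y \<mu> pstab_img[of \<mu> a] by (simp add: a_def)
    hence "\<mu> 0 \<in> {0,1}" "\<mu> 1 \<in> {0,1}" by auto
    thus ?thesis using \<mu> by (auto simp: img_def)
  qed
  have sub: "subgroup (pstab subset_auts b) ?G"
  proof (rule group.subgroupI[OF G])
    show "pstab subset_auts b \<subseteq> carrier ?G" using ba by (simp add: perm_group_def)
    show "pstab subset_auts b \<noteq> {}" using img_aut[of id] img_id by (auto simp: pstab_def)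
  next
    fix h assume "h \<in> pstab subset_auts b"
    thus "inv\<^bsub>?G\<^esub> h \<in> pstab subset_auts b" using inv_gen[of h a] iv_pstab[of h b] ba by auto
  next
    fix h k assume "h \<in> pstab subset_auts b" "k \<in> pstab subset_auts b"
    thus "h \<otimes>\<^bsub>?G\<^esub> k \<in> pstab subset_auts b"
      by (auto simp: perm_group_def pstab_def subset_auts_def bij_comp)
  qed
  have conj: "x \<otimes>\<^bsub>?G\<^esub> h \<otimes>\<^bsub>?G\<^esub> inv\<^bsub>?G\<^esub> x \<in> pstab subset_auts b"
    if x: "x \<in> carrier ?G" and h: "h \<in> pstab subset_auts b" for x h
  proof -
    have xa: "x \<in> pstab subset_auts a" using x by (simp add: perm_group_def)
    have ix: "iv x \<in> pstab subset_auts a" by (rule iv_pstab[OF xa])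
    have bx: "bij x" using xa by (auto simp: pstab_def subset_auts_def)
    have fxi: "x (iv x S) = S" for S using bx by (simp add: bij_is_surj surj_f_inv_f)
    have hS: "h S = S" if "S \<in> {{0,1},{0},{1}}" for S using h that by (auto simp: pstab_def b_def)
    have ixS: "iv x S \<in> {{0,1},{0},{1}}" if "S \<in> {{0,1},{0},{1}}" for S
    proof -
      have i01: "iv x {0,1} = {0,1}" using ix by (simp add: pstab_def a_def)
      show ?thesis using that sw[OF ix] i01 by blast
    qed
    have "x \<circ> h \<circ> iv x \<in> subset_auts" using xa ix h
      by (intro comp_aut) (simp_all add: pstab_def)
    moreover have "(x \<circ> h \<circ> iv x) S = S" if "S \<in> b" for S
    proof -
      have S: "S \<in> {{0,1},{0},{1}}" using that by (simp add: b_def)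
      have "h (iv x S) = iv x S" by (rule hS[OF ixS[OF S]])
      thus ?thesis using fxi by simp
    qed
    ultimately show ?thesis using inv_gen[OF xa] by (simp add: perm_group_def pstab_def)
  qed
  have nrm: "pstab subset_auts b \<lhd> ?G" using group.normal_inv_iff[OF G] sub conj by blast
  define s :: "nat \<Rightarrow> nat" where "s x = (if x = 0 then 1 else if x = 1 then 0 else x)" for x
  have ss: "s (s x) = x" for x by (simp add: s_def)
  hence bs: "bij s" by (rule involuntory_imp_bij)
  have "s ` {0,1} = {0,1}" by (auto simp: s_def)
  hence "img s \<in> pstab subset_auts a" using pstab_img[OF bs] by (simp add: a_def)
  moreover have "img s \<notin> pstab subset_auts b" using pstab_img[OF bs, of b] by (simp add: b_def s_def)
  ultimately have "pstab subset_auts b \<noteq> pstab subset_auts a" by blast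
  hence "\<not> stab_simple_pair subset_auts a b" using nrm unfolding stab_simple_pair_def by blast
  moreover have "finite a" "finite b" "a \<subseteq> b" by (auto simp: a_def b_def)
  ultimately show ?thesis unfolding simple_dyn_def by blast
qed



lemma sig_union: "sig (c \<union> (\<lambda>x. {x}) ` F) w = sig c w \<union> (if w \<in> F then {{w}} else {})"
  by (auto simp: sig_def)

lemma stab_pair_good:
  fixes a b :: "nat set set"
  assumes fa: "finite a" and fb: "finite b" and ab: "a \<subseteq> b"
  and cell: "\<And>x y. finite {z. sig a z = sig a x} \<Longrightarrow> sig a y = sig a x \<Longrightarrow> y = x"
  shows "stab_simple_pair subset_auts a b"
  unfolding stab_simple_pair_def
proof (intro allI impI)
  fix N assume h: "N \<lhd> perm_group (pstab subset_auts a) \<and> pstab subset_auts b \<subseteq> N"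
  let ?G = "perm_group (pstab subset_auts a)"
  have G: "group ?G" by (rule grp)
  have sub: "subgroup N ?G" and cj: "\<forall>x\<in>carrier ?G. \<forall>h\<in>N. x \<otimes>\<^bsub>?G\<^esub> h \<otimes>\<^bsub>?G\<^esub> inv\<^bsub>?G\<^esub> x \<in> N"
    using h group.normal_inv_iff[OF G] by blast+
  have Nsub: "N \<subseteq> pstab subset_auts a" using subgroup.subset[OF sub] by (simp add: perm_group_def)
  have Nid: "id \<in> N" using subgroup.one_closed[OF sub] by (simp add: perm_group_def)
  have Nm: "f \<circ> g \<in> N" if "f \<in> N" "g \<in> N" for f g
    using subgroup.m_closed[OF sub that] by (simp add: perm_group_def)
  have bN: "pstab subset_auts b \<subseteq> N" using h by blast
  have key: "finite S \<Longrightarrow> \<forall>\<sigma>. bij \<sigma> \<and> (\<forall>x. sig a (\<sigma> x) = sig a x) \<and> (\<forall>x. sig a x \<notin> S \<longrightarrow> \<sigma> x = x) \<longrightarrow> img \<sigma> \<in> N" for S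
  proof (induction S rule: finite_induct)
    case empty
    show ?case
    proof (intro allI impI)
      fix \<sigma> :: "nat \<Rightarrow> nat" assume "bij \<sigma> \<and> (\<forall>x. sig a (\<sigma> x) = sig a x) \<and> (\<forall>x. sig a x \<notin> {} \<longrightarrow> \<sigma> x = x)"
      hence "\<sigma> = id" by (auto simp: fun_eq_iff)
      thus "img \<sigma> \<in> N" using Nid img_id by simp
    qed
  next
    case (insert s S)
    show ?case
    proof (intro allI impI)
      fix \<sigma> :: "nat \<Rightarrow> nat" assume hs: "bij \<sigma> \<and> (\<forall>x. sig a (\<sigma> x) = sig a x) \<and> (\<forall>x. sig a x \<notin> insert s S \<longrightarrow> \<sigma> x = x)"
      hence bs: "bij \<sigma>" and ps: "\<And>x. sig a (\<sigma> x) = sig a x" and fs: "\<And>x. sig a x \<notin> insert s S \<Longrightarrow> \<sigma> x = x" by auto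
      define \<sigma>1 where "\<sigma>1 x = (if sig a x \<in> {s} then \<sigma> x else x)" for x
      define \<sigma>2 where "\<sigma>2 x = (if sig a x \<in> - {s} then \<sigma> x else x)" for x
      have b1: "bij \<sigma>1" unfolding \<sigma>1_def using restr_bij[of \<sigma> "sig a" "{s}"] bs ps by blast
      have b2: "bij \<sigma>2" unfolding \<sigma>2_def using restr_bij[of \<sigma> "sig a" "- {s}"] bs ps by blast
      have comp: "\<sigma> = \<sigma>1 \<circ> \<sigma>2" by (auto simp: fun_eq_iff \<sigma>1_def \<sigma>2_def ps)
      have p2: "\<forall>x. sig a (\<sigma>2 x) = sig a x" by (simp add: \<sigma>2_def ps)
      have f2: "\<forall>x. sig a x \<notin> S \<longrightarrow> \<sigma>2 x = x" using fs by (auto simp: \<sigma>2_def)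
      have "img \<sigma>2 \<in> N" using insert.IH b2 p2 f2 by blast
      moreover have "img \<sigma>1 \<in> N"
      proof -
        define P where "P = {x. sig a x = s}"
        have sp1: "sp P \<sigma>1" using b1 by (auto simp: sp_def P_def \<sigma>1_def)
        show ?thesis
        proof (cases "finite P")
          case True
          have "\<sigma>1 = id"
          proof
            fix x show "\<sigma>1 x = id x"
            proof (cases "sig a x = s")
              case True
              hence "finite {z. sig a z = sig a x}" using \<open>finite P\<close> by (simp add: P_def)
              thus ?thesis using cell[of x "\<sigma> x"] ps True by (simp add: \<sigma>1_def)
            qed (simp add: \<sigma>1_def)
          qed
          thus ?thesis using Nid img_id by simp
        next
          case False
          have Pu: "P = (\<Union>t\<in>Pow b. P \<inter> {y. sig b y = t})" using sig_in_Pow by blast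
          have "\<exists>t\<in>Pow b. infinite (P \<inter> {y. sig b y = t})"
          proof (rule ccontr)
            assume "\<not> ?thesis"
            hence "finite (\<Union>t\<in>Pow b. P \<inter> {y. sig b y = t})" using fb by (intro finite_UN_I) auto
            thus False using False Pu by simp
          qed
          then obtain t where t: "infinite (P \<inter> {y. sig b y = t})" by blast
          define Q where "Q = P \<inter> {y. sig b y = t}"
          have Q: "infinite Q" "Q \<subseteq> P" using t by (auto simp: Q_def)
          have "\<sigma>1 \<in> {\<tau>. img \<tau> \<in> N}"
          proof (rule cell_lemma[OF Q _ _ _ sp1])
            fix \<tau> \<tau>' assume "\<tau> \<in> {\<tau>. img \<tau> \<in> N}" "\<tau>' \<in> {\<tau>. img \<tau> \<in> N}"
            thus "\<tau> \<circ> \<tau>' \<in> {\<tau>. img \<tau> \<in> N}" using Nm by (simp add: img_comp)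
          next
            fix \<rho> \<tau> assume \<rho>: "sp P \<rho>" and \<tau>: "\<tau> \<in> {\<tau>. img \<tau> \<in> N}"
            have b\<rho>: "bij \<rho>" using \<rho> by (simp add: sp_def)
            have "sig a (\<rho> x) = sig a x" for x
            proof (cases "x \<in> P")
              case True thus ?thesis using sp_maps[OF \<rho> True] by (simp add: P_def)
            qed (use \<rho> in \<open>simp add: sp_def\<close>)
            hence \<rho>a: "img \<rho> \<in> pstab subset_auts a" by (simp add: pstab_img[OF b\<rho>] fix_sig[OF b\<rho>])
            have "img \<rho> \<otimes>\<^bsub>?G\<^esub> img \<tau> \<otimes>\<^bsub>?G\<^esub> inv\<^bsub>?G\<^esub> (img \<rho>) \<in> N"
              using cj \<rho>a \<tau> by (simp add: perm_group_def)
            thus "\<rho> \<circ> \<tau> \<circ> iv \<rho> \<in> {\<tau>. img \<tau> \<in> N}"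
              using inv_img[OF b\<rho> \<rho>a] by (simp add: perm_group_def img_comp)
          next
            fix \<tau> assume \<tau>: "sp Q \<tau>"
            have b\<tau>: "bij \<tau>" using \<tau> by (simp add: sp_def)
            have "sig b (\<tau> x) = sig b x" for x
            proof (cases "x \<in> Q")
              case True thus ?thesis using sp_maps[OF \<tau> True] by (simp add: Q_def)
            qed (use \<tau> in \<open>simp add: sp_def\<close>)
            hence "img \<tau> \<in> pstab subset_auts b" by (simp add: pstab_img[OF b\<tau>] fix_sig[OF b\<tau>])
            thus "\<tau> \<in> {\<tau>. img \<tau> \<in> N}" using bN by auto
          qed
          thus ?thesis by simp
        qed
      qed
      ultimately have "img \<sigma>1 \<circ> img \<sigma>2 \<in> N" using Nm by blast
      moreover have "img \<sigma> = img \<sigma>1 \<circ> img \<sigma>2" using comp img_comp by simp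
      ultimately show "img \<sigma> \<in> N" by simp
    qed
  qed
  show "N = pstab subset_auts a"
  proof
    show "N \<subseteq> pstab subset_auts a" by (rule Nsub)
    show "pstab subset_auts a \<subseteq> N"
    proof
      fix f assume f: "f \<in> pstab subset_auts a"
      hence "f \<in> subset_auts" by (simp add: pstab_def)
      then obtain \<sigma> where \<sigma>: "bij \<sigma>" "f = img \<sigma>" using aut_rep by blast
      have "\<forall>A\<in>a. \<sigma> ` A = A" using f \<sigma> by (simp add: pstab_img)
      hence p: "\<forall>x. sig a (\<sigma> x) = sig a x" using fix_sig[OF \<sigma>(1)] by simp
      have q: "\<forall>x. sig a x \<notin> Pow a \<longrightarrow> \<sigma> x = x" using sig_in_Pow by simp
      have kk: "\<forall>\<sigma>. bij \<sigma> \<and> (\<forall>x. sig a (\<sigma> x) = sig a x) \<and> (\<forall>x. sig a x \<notin> Pow a \<longrightarrow> \<sigma> x = x) \<longrightarrow> img \<sigma> \<in> N"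
        by (rule key) (use fa in simp)
      have "img \<sigma> \<in> N" using kk \<sigma>(1) p q by blast
      thus "f \<in> N" using \<sigma> by simp
    qed
  qed
qed

lemma almost: "almost_simple_dyn subset_auts {a :: nat set set. finite a}"
  unfolding almost_simple_dyn_def
proof (intro ballI)
  fix c :: "nat set set" assume "c \<in> {a. finite a}"
  hence fc: "finite c" by simp
  define F where "F = {x. finite {y. sig c y = sig c x}}"
  define a where "a = c \<union> (\<lambda>x. {x}) ` F"
  have "F \<subseteq> (\<Union>s\<in>Pow c. if finite {y. sig c y = s} then {y. sig c y = s} else {})"
  proof
    fix x assume "x \<in> F"
    thus "x \<in> (\<Union>s\<in>Pow c. if finite {y. sig c y = s} then {y. sig c y = s} else {})"
      by (intro UN_I[of "sig c x"]) (auto simp: F_def sig_def)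
  qed
  moreover have "finite (\<Union>s\<in>Pow c. if finite {y. sig c y = s} then {y. sig c y = s} else {})"
    using fc by (intro finite_UN_I) auto
  ultimately have fF: "finite F" by (rule finite_subset)
  have fa: "finite a" using fF fc by (simp add: a_def)
  have cell: "y = x" if fin: "finite {z. sig a z = sig a x}" and y: "sig a y = sig a x" for x y
  proof (cases "x \<in> F")
    case True
    hence "{x} \<in> sig a x" by (auto simp: a_def sig_def)
    hence "{x} \<in> sig a y" using y by simp
    thus ?thesis by (simp add: sig_def)
  next
    case False
    hence inf: "infinite {z. sig c z = sig c x}" by (simp add: F_def)
    have sb: "{z. sig c z = sig c x} \<subseteq> {z. sig a z = sig a x}"
    proof
      fix z assume "z \<in> {z. sig c z = sig c x}"
      hence z: "sig c z = sig c x" by simp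
      hence "z \<notin> F" using False by (simp add: F_def)
      thus "z \<in> {z. sig a z = sig a x}" using z False by (simp add: a_def sig_union)
    qed
    thus ?thesis using finite_subset[OF sb fin] inf by blast
  qed
  show "\<exists>a\<in>{a. finite a}. c \<subseteq> a \<and> (\<forall>b\<in>{a. finite a}. a \<subseteq> b \<longrightarrow> stab_simple_pair subset_auts a b)"
  proof (intro bexI conjI ballI impI)
    show "c \<subseteq> a" by (simp add: a_def)
    show "a \<in> {a. finite a}" using fa by simp
    fix b assume "b \<in> {a :: nat set set. finite a}" "a \<subseteq> b"
    thus "stab_simple_pair subset_auts a b" by (intro stab_pair_good[OF fa _ _ cell]) auto
  qed
qed

theorem mainTheorem17:
  shows "dynamical_ideal subset_auts {a :: nat set set. finite a}
       \<and> almost_simple_dyn subset_auts {a :: nat set set. finite a}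
       \<and> \<not> simple_dyn subset_auts {a :: nat set set. finite a}"
proof -
  have "dynamical_ideal subset_auts {a :: nat set set. finite a}"
    unfolding dynamical_ideal_def
  proof (intro conjI ballI allI impI)
    fix a b :: "nat set set" assume "a \<in> {a. finite a}" "b \<subseteq> a"
    thus "b \<in> {a. finite a}" using finite_subset[of b a] by simp
  qed auto
  thus ?thesis using almost not_simple by blast
qed


end
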